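(* Let $n,\kappa,d'\ge1$ and $1\le i_0\le d'$. Let $\mathcal{V}_1,\dots,\mathcal{V}_K\in\mathbb{R}^{p_1\times\cdots\times p_{d'}}$, with $p_{i_0}=n^\kappa$, be an orthonormal system (with respect to the Frobenius inner product) of rank-one tensors $\mathcal{V}_k=\mathbf{v}^1_k\circ\cdots\circ\mathbf{v}^{d'}_k$ with $\|\mathbf{v}^i_k\|_2=1$ for all $i,k$. Let $A_{i_0}\in\mathbb{R}^{m\times n^\kappa}$ have the RIP$(\varepsilon/2,\mathcal{S}_{1,2})$ property and assume $\mathbf{v}^{i_0}_k\in\mathcal{S}_1$ for all $k$. Let $\mathcal{L}(\mathcal{X})=\mathcal{X}\times_{i_0}A_{i_0}$. Then $(1-\varepsilon)\|\mathcal{V}_k\|^2\le\|\mathcal{L}\mathcal{V}_k\|^2\le(1+\varepsilon)\|\mathcal{V}_k\|^2$ for all $k$, and $(1-\varepsilon)\|\mathcal{V}_k\pm\mathcal{V}_l\|^2\le\|\mathcal{L}(\mathcal{V}_k\pm\mathcal{V}_l)\|^2\le(1+\varepsilon)\|\mathcal{V}_k\pm\mathcal{V}_l\|^2$ for all $1\le k,l\le K$.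
   Context: $\|\cdot\|$ is the Frobenius norm, $\circ$ the outer product, and $\times_j$ the $j$-mode product $(\mathcal{X}\times_jU)_{i_1,\dots,\ell,\dots,i_D}=\sum_{i_j}\mathcal{X}_{i_1,\dots,i_j,\dots,i_D}U_{\ell,i_j}$. $\mathcal{S}_1=\{\mathbf{u}^1\otimes\cdots\otimes\mathbf{u}^\kappa:\mathbf{u}^i\in\mathbb{S}^{n-1}\}\subset\mathbb{R}^{n^\kappa}$ ($\otimes$ Kronecker product), $\mathcal{S}_2=\{(\mathbf{x}+\mathbf{y})/\|\mathbf{x}+\mathbf{y}\|_2:\mathbf{x},\mathbf{y}\in\mathcal{S}_1,\langle\mathbf{x},\mathbf{y}\rangle=0\}$, $\mathcal{S}_{1,2}=\mathcal{S}_1\cup\mathcal{S}_2$. A matrix $A$ has RIP$(\varepsilon,\mathcal{S})$ if $(1-\varepsilon)\|s\|^2\le\|As\|^2\le(1+\varepsilon)\|s\|^2$ for all $s\in\mathcal{S}$. *)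

theory Defs
  imports "HOL-Analysis.Analysis"
begin

text \<open>Conventions: modes are indexed 0..d-1, vector entries 0..N-1.
  A tensor of order d with mode sizes p 0, ..., p (d-1) is a function on
  multi-indices (nat => nat); its valid index set is tidx d p.\<close>

definition tidx :: "nat \<Rightarrow> (nat \<Rightarrow> nat) \<Rightarrow> (nat \<Rightarrow> nat) set" where
  "tidx d p = PiE {..<d} (\<lambda>j. {..<p j})"

definition finner :: "nat \<Rightarrow> (nat \<Rightarrow> nat) \<Rightarrow> ((nat \<Rightarrow> nat) \<Rightarrow> real) \<Rightarrow> ((nat \<Rightarrow> nat) \<Rightarrow> real) \<Rightarrow> real" where
  "finner d p X Y = (\<Sum>idx\<in>tidx d p. X idx * Y idx)"

definition fnorm2 :: "nat \<Rightarrow> (nat \<Rightarrow> nat) \<Rightarrow> ((nat \<Rightarrow> nat) \<Rightarrow> real) \<Rightarrow> real" where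
  "fnorm2 d p X = (\<Sum>idx\<in>tidx d p. (X idx)\<^sup>2)"

definition mode_prod :: "(nat \<Rightarrow> nat) \<Rightarrow> ((nat \<Rightarrow> nat) \<Rightarrow> real) \<Rightarrow> nat \<Rightarrow> (nat \<Rightarrow> nat \<Rightarrow> real) \<Rightarrow> ((nat \<Rightarrow> nat) \<Rightarrow> real)" where
  "mode_prod p X j U = (\<lambda>idx. \<Sum>t<p j. X (idx(j := t)) * U (idx j) t)"

definition outer :: "nat \<Rightarrow> (nat \<Rightarrow> nat \<Rightarrow> real) \<Rightarrow> ((nat \<Rightarrow> nat) \<Rightarrow> real)" where
  "outer d v = (\<lambda>idx. \<Prod>i<d. v i (idx i))"

definition vinner :: "nat \<Rightarrow> (nat \<Rightarrow> real) \<Rightarrow> (nat \<Rightarrow> real) \<Rightarrow> real" where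
  "vinner N x y = (\<Sum>t<N. x t * y t)"

definition vnorm2 :: "nat \<Rightarrow> (nat \<Rightarrow> real) \<Rightarrow> real" where
  "vnorm2 N x = (\<Sum>t<N. (x t)\<^sup>2)"

text \<open>Kronecker product of vectors in R^n (first factor most significant).\<close>
fun kron :: "nat \<Rightarrow> (nat \<Rightarrow> real) list \<Rightarrow> nat \<Rightarrow> real" where
  "kron n [] = (\<lambda>t. 1)"
| "kron n (u # us) = (\<lambda>t. u (t div n ^ length us) * kron n us (t mod n ^ length us))"

definition S1 :: "nat \<Rightarrow> nat \<Rightarrow> (nat \<Rightarrow> real) set" where
  "S1 n \<kappa> = {x. \<exists>us. length us = \<kappa> \<and> (\<forall>u\<in>set us. vnorm2 n u = 1)
                    \<and> (\<forall>t<n ^ \<kappa>. x t = kron n us t)}"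

definition S2 :: "nat \<Rightarrow> nat \<Rightarrow> (nat \<Rightarrow> real) set" where
  "S2 n \<kappa> = {s. \<exists>x\<in>S1 n \<kappa>. \<exists>y\<in>S1 n \<kappa>. vinner (n ^ \<kappa>) x y = 0 \<and>
                 (\<forall>t<n ^ \<kappa>. s t = (x t + y t) / sqrt (vnorm2 (n ^ \<kappa>) (\<lambda>r. x r + y r)))}"

definition S12 :: "nat \<Rightarrow> nat \<Rightarrow> (nat \<Rightarrow> real) set" where
  "S12 n \<kappa> = S1 n \<kappa> \<union> S2 n \<kappa>"

definition matvec :: "nat \<Rightarrow> (nat \<Rightarrow> nat \<Rightarrow> real) \<Rightarrow> (nat \<Rightarrow> real) \<Rightarrow> (nat \<Rightarrow> real)" where
  "matvec N A x = (\<lambda>r. \<Sum>t<N. A r t * x t)"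

definition RIP :: "nat \<Rightarrow> nat \<Rightarrow> (nat \<Rightarrow> nat \<Rightarrow> real) \<Rightarrow> real \<Rightarrow> (nat \<Rightarrow> real) set \<Rightarrow> bool" where
  "RIP m N A \<epsilon> S = (\<forall>s\<in>S. (1 - \<epsilon>) * vnorm2 N s \<le> vnorm2 m (matvec N A s)
                          \<and> vnorm2 m (matvec N A s) \<le> (1 + \<epsilon>) * vnorm2 N s)"

end

theory Submission
  imports Defs
begin

lemma finner_outer:
  "finner d q (outer d f) (outer d g) = (\<Prod>i<d. vinner (q i) (f i) (g i))"
proof -
  have "(\<Prod>i<d. vinner (q i) (f i) (g i)) = (\<Prod>i<d. \<Sum>t\<in>{..<q i}. f i t * g i t)"
    by (simp add: vinner_def)
  also have "\<dots> = (\<Sum>idx\<in>PiE {..<d} (\<lambda>i. {..<q i}). \<Prod>i<d. f i (idx i) * g i (idx i))"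
    by (rule prod_sum_PiE) auto
  also have "\<dots> = finner d q (outer d f) (outer d g)"
    by (simp add: finner_def outer_def tidx_def prod.distrib)
  finally show ?thesis by simp
qed

lemma fnorm2_finner: "fnorm2 d q X = finner d q X X"
  by (simp add: fnorm2_def finner_def power2_eq_square)

lemma fnorm2_lin:
  "fnorm2 d q (\<lambda>idx. X idx + s * Y idx)
   = fnorm2 d q X + 2 * s * finner d q X Y + s\<^sup>2 * fnorm2 d q Y"
  by (simp add: fnorm2_def finner_def power2_sum sum.distrib sum_distrib_left
      power_mult_distrib algebra_simps)

lemma mode_prod_lin:
  "mode_prod p (\<lambda>idx. X idx + s * Y idx) j U
   = (\<lambda>idx. mode_prod p X j U idx + s * mode_prod p Y j U idx)"
  by (simp add: mode_prod_def sum.distrib sum_distrib_left algebra_simps)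

lemma mode_prod_outer:
  assumes "j < d"
  shows "mode_prod p (outer d f) j U
       = outer d (f(j := (\<lambda>r. \<Sum>t<p j. U r t * f j t)))"
proof
  fix idx
  have dj: "{..<d} = insert j ({..<d} - {j})" using assms by auto
  have "mode_prod p (outer d f) j U idx
      = (\<Sum>t<p j. (f j t * (\<Prod>i\<in>{..<d}-{j}. f i (idx i))) * U (idx j) t)"
    unfolding mode_prod_def outer_def
    apply (rule sum.cong[OF refl])
    apply (subst dj, subst prod.insert, simp, simp)
    apply (intro arg_cong2[where f="(*)"] refl arg_cong2[where f="(*)"] prod.cong) by auto
  also have "\<dots> = (\<Sum>t<p j. U (idx j) t * f j t) * (\<Prod>i\<in>{..<d}-{j}. f i (idx i))"
    by (simp add: sum_distrib_left sum_distrib_right mult_ac)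
  also have "\<dots> = outer d (f(j := (\<lambda>r. \<Sum>t<p j. U r t * f j t))) idx"
    unfolding outer_def
    apply (subst dj, subst prod.insert, simp, simp)
    apply (intro arg_cong2[where f="(*)"] refl prod.cong) by auto
  finally show "mode_prod p (outer d f) j U idx = outer d (f(j := (\<lambda>r. \<Sum>t<p j. U r t * f j t))) idx" .
qed

lemma prod_split:
  assumes "j < (d::nat)"
  shows "(\<Prod>i<d. g i) = g j * (\<Prod>i\<in>{..<d}-{j}. g i)"
proof -
  have "j \<in> {..<d}" using assms by simp
  then show ?thesis using prod.remove[of "{..<d}" j g] by simp
qed

lemma vinner_abs_le:
  assumes "vnorm2 N f = 1" "vnorm2 N g = 1"
  shows "\<bar>vinner N f g\<bar> \<le> 1"
proof -
  have "\<bar>vinner N f g\<bar> \<le> (\<Sum>t<N. \<bar>f t * g t\<bar>)"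
    unfolding vinner_def by (rule sum_abs)
  also have "\<dots> \<le> (\<Sum>t<N. ((f t)\<^sup>2 + (g t)\<^sup>2) / 2)"
  proof (rule sum_mono)
    fix t
    have "0 \<le> (\<bar>f t\<bar> - \<bar>g t\<bar>)\<^sup>2" by simp
    then show "\<bar>f t * g t\<bar> \<le> ((f t)\<^sup>2 + (g t)\<^sup>2) / 2"
      by (simp add: power2_eq_square abs_mult algebra_simps)
  qed
  also have "\<dots> = 1" using assms
    by (simp add: vnorm2_def sum.distrib flip: sum_divide_distrib)
  finally show ?thesis .
qed

lemma prod_abs_le1:
  assumes "\<And>i. i \<in> I \<Longrightarrow> \<bar>g i\<bar> \<le> (1::real)"
  shows "\<bar>prod g I\<bar> \<le> 1"
  using assms
  by (induction I rule: infinite_finite_induct)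
     (auto simp: abs_mult intro: mult_le_one)

lemma vnorm2_vinner: "vnorm2 N x = vinner N x x"
  by (simp add: vnorm2_def vinner_def power2_eq_square)

lemma matvec_lin:
  "matvec N A (\<lambda>t. x t + s * y t) = (\<lambda>r. matvec N A x r + s * matvec N A y r)"
  by (simp add: matvec_def sum.distrib sum_distrib_left algebra_simps)

lemma vnorm2_lin:
  "vnorm2 N (\<lambda>t. x t + s * y t) = vnorm2 N x + 2 * s * vinner N x y + s\<^sup>2 * vnorm2 N y"
  by (simp add: vnorm2_def vinner_def power2_sum sum.distrib sum_distrib_left
      power_mult_distrib algebra_simps)

lemma vnorm2_scale: "vnorm2 N (\<lambda>t. x t / c) = vnorm2 N x / c\<^sup>2"
  by (simp add: vnorm2_def power_divide sum_divide_distrib)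

lemma matvec_scale: "matvec N A (\<lambda>t. x t / c) = (\<lambda>r. matvec N A x r / c)"
  by (simp add: matvec_def sum_divide_distrib)

lemma S1_neg:
  assumes "y \<in> S1 n \<kappa>" "\<kappa> \<ge> 1"
  shows "(\<lambda>t. - y t) \<in> S1 n \<kappa>"
proof -
  obtain us where us: "length us = \<kappa>" "\<forall>u\<in>set us. vnorm2 n u = 1"
    "\<forall>t<n ^ \<kappa>. y t = kron n us t"
    using assms(1) unfolding S1_def by auto
  then obtain u rs where ur: "us = u # rs" using assms(2) by (cases us) auto
  let ?vs = "(\<lambda>t. - u t) # rs"
  have "vnorm2 n (\<lambda>t. - u t) = vnorm2 n u" by (simp add: vnorm2_def)
  then have "\<forall>w\<in>set ?vs. vnorm2 n w = 1" using us ur by auto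
  moreover have "\<forall>t<n ^ \<kappa>. - y t = kron n ?vs t" using us ur by auto
  ultimately show ?thesis using us ur unfolding S1_def by (intro CollectI exI[of _ ?vs]) auto
qed

lemma rip_cross:
  assumes rip: "RIP m N A e (S12 n \<kappa>)" and NN: "N = n ^ \<kappa>"
    and x: "x \<in> S1 n \<kappa>" and y: "y \<in> S1 n \<kappa>" and k1: "\<kappa> \<ge> 1"
    and nx: "vnorm2 N x = 1" and ny: "vnorm2 N y = 1" and o: "vinner N x y = 0"
  shows "\<bar>vinner m (matvec N A x) (matvec N A y)\<bar> \<le> e"
proof -
  have main: "vnorm2 m (matvec N A (\<lambda>t. x t + s * y t)) \<le> 2 * (1 + e)
      \<and> 2 * (1 - e) \<le> vnorm2 m (matvec N A (\<lambda>t. x t + s * y t))"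
    if s: "s \<in> {1, -1}" for s
  proof -
    define y' where "y' = (\<lambda>t. s * y t)"
    have y'S: "y' \<in> S1 n \<kappa>"
      using s y S1_neg[OF y k1] unfolding y'_def by auto
    have ss: "s\<^sup>2 = 1" using s by auto
    have o': "vinner (n ^ \<kappa>) x y' = 0" using o NN
      by (simp add: y'_def vinner_def sum_distrib_left algebra_simps flip: sum_distrib_left)
    have nxy: "vnorm2 N (\<lambda>t. x t + s * y t) = 2"
      using nx ny o ss by (simp add: vnorm2_lin)
    define z where "z = (\<lambda>t. (x t + y' t) / sqrt (vnorm2 (n ^ \<kappa>) (\<lambda>r. x r + y' r)))"
    have zS: "z \<in> S12 n \<kappa>" unfolding S12_def S2_def z_def
      using x y'S o' by blast
    have zz: "z = (\<lambda>t. (x t + s * y t) / sqrt 2)"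
      using nxy NN by (simp add: z_def y'_def)
    have nz: "vnorm2 N z = 1" by (simp add: zz vnorm2_scale nxy)
    have Az: "vnorm2 m (matvec N A z) = vnorm2 m (matvec N A (\<lambda>t. x t + s * y t)) / 2"
      by (simp add: zz matvec_scale vnorm2_scale)
    from rip zS have "(1 - e) * vnorm2 N z \<le> vnorm2 m (matvec N A z)
       \<and> vnorm2 m (matvec N A z) \<le> (1 + e) * vnorm2 N z"
      unfolding RIP_def NN by blast
    then show ?thesis using nz Az by auto
  qed
  have p: "vnorm2 m (matvec N A (\<lambda>t. x t + 1 * y t))
     = vnorm2 m (matvec N A x) + 2 * vinner m (matvec N A x) (matvec N A y) + vnorm2 m (matvec N A y)"
    by (simp only: matvec_lin vnorm2_lin) simp
  have q: "vnorm2 m (matvec N A (\<lambda>t. x t + (-1) * y t))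
     = vnorm2 m (matvec N A x) - 2 * vinner m (matvec N A x) (matvec N A y) + vnorm2 m (matvec N A y)"
    by (simp only: matvec_lin vnorm2_lin) simp
  show ?thesis using main[of 1] main[of "-1"] p q by auto
qed

theorem lemma4:
  fixes n \<kappa> d m K i0 :: nat
    and p :: "nat \<Rightarrow> nat"
    and v :: "nat \<Rightarrow> nat \<Rightarrow> nat \<Rightarrow> real"
    and A :: "nat \<Rightarrow> nat \<Rightarrow> real"
    and \<epsilon> :: real
  assumes "n \<ge> 1" and "\<kappa> \<ge> 1" and "d \<ge> 1" and "i0 < d"
    and "p i0 = n ^ \<kappa>"
    and unit: "\<forall>k<K. \<forall>i<d. vnorm2 (p i) (v k i) = 1"
    and orth: "\<forall>k<K. \<forall>l<K. finner d p (outer d (v k)) (outer d (v l)) = (if k = l then 1 else 0)"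
    and rip: "RIP m (n ^ \<kappa>) A (\<epsilon> / 2) (S12 n \<kappa>)"
    and inS1: "\<forall>k<K. v k i0 \<in> S1 n \<kappa>"
  shows "(\<forall>k<K.
            (1 - \<epsilon>) * fnorm2 d p (outer d (v k))
              \<le> fnorm2 d (p(i0 := m)) (mode_prod p (outer d (v k)) i0 A)
          \<and> fnorm2 d (p(i0 := m)) (mode_prod p (outer d (v k)) i0 A)
              \<le> (1 + \<epsilon>) * fnorm2 d p (outer d (v k)))
       \<and> (\<forall>k<K. \<forall>l<K. \<forall>\<sigma>\<in>{1, -1::real}.
            (let W = (\<lambda>idx. outer d (v k) idx + \<sigma> * outer d (v l) idx) in
              (1 - \<epsilon>) * fnorm2 d p W \<le> fnorm2 d (p(i0 := m)) (mode_prod p W i0 A)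
            \<and> fnorm2 d (p(i0 := m)) (mode_prod p W i0 A) \<le> (1 + \<epsilon>) * fnorm2 d p W))"
proof -
  let ?N = "n ^ \<kappa>"
  let ?q = "p(i0 := m)"
  define Ax where "Ax k = matvec ?N A (v k i0)" for k
  define w where "w k = (v k)(i0 := Ax k)" for k
  have Lk: "mode_prod p (outer d (v k)) i0 A = outer d (w k)" for k
    using mode_prod_outer[OF \<open>i0 < d\<close>, of p "v k" A] \<open>p i0 = ?N\<close>
    by (simp add: w_def Ax_def matvec_def)
  define c where "c k l = (\<Prod>i\<in>{..<d}-{i0}. vinner (p i) (v k i) (v l i))" for k l
  have G: "finner d p (outer d (v k)) (outer d (v l)) = vinner ?N (v k i0) (v l i0) * c k l" for k l
    using \<open>p i0 = ?N\<close> by (simp add: finner_outer prod_split[OF \<open>i0 < d\<close>] c_def)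
  have H: "finner d ?q (outer d (w k)) (outer d (w l)) = vinner m (Ax k) (Ax l) * c k l" for k l
    by (simp add: finner_outer prod_split[OF \<open>i0 < d\<close>] c_def w_def)
  have ckk: "c k k = 1" if "k < K" for k
    unfolding c_def using unit that by (intro prod.neutral) (auto simp: vnorm2_vinner[symmetric])
  have cle: "\<bar>c k l\<bar> \<le> 1" if "k < K" "l < K" for k l
    unfolding c_def using unit that by (intro prod_abs_le1 vinner_abs_le) auto
  have nv: "vnorm2 ?N (v k i0) = 1" if "k < K" for k
    using unit that \<open>i0 < d\<close> \<open>p i0 = ?N\<close> by metis
  have ripk: "(1 - \<epsilon>/2) \<le> vnorm2 m (Ax k) \<and> vnorm2 m (Ax k) \<le> (1 + \<epsilon>/2)" if "k < K" for k
  proof -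
    have "v k i0 \<in> S12 n \<kappa>" using inS1 that unfolding S12_def by auto
    then show ?thesis using rip nv[OF that] unfolding RIP_def Ax_def by fastforce
  qed
  have epos: "\<epsilon> \<ge> 0" if "k < K" for k using ripk[OF that] by auto
  have Fk: "fnorm2 d p (outer d (v k)) = 1" if "k < K" for k
    using orth that by (simp add: fnorm2_finner)
  have FLk: "fnorm2 d ?q (outer d (w k)) = vnorm2 m (Ax k)" if "k < K" for k
    using H[of k k] ckk[OF that] by (simp add: fnorm2_finner vnorm2_vinner)
  have part1: "\<forall>k<K.
            (1 - \<epsilon>) * fnorm2 d p (outer d (v k))
              \<le> fnorm2 d ?q (mode_prod p (outer d (v k)) i0 A)
          \<and> fnorm2 d ?q (mode_prod p (outer d (v k)) i0 A)
              \<le> (1 + \<epsilon>) * fnorm2 d p (outer d (v k))"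
  proof (intro allI impI)
    fix k assume k: "k < K"
    show "(1 - \<epsilon>) * fnorm2 d p (outer d (v k))
              \<le> fnorm2 d ?q (mode_prod p (outer d (v k)) i0 A)
          \<and> fnorm2 d ?q (mode_prod p (outer d (v k)) i0 A)
              \<le> (1 + \<epsilon>) * fnorm2 d p (outer d (v k))"
      using Fk[OF k] FLk[OF k] Lk[of k] ripk[OF k] epos[OF k] by auto
  qed
  have part2: "\<forall>k<K. \<forall>l<K. \<forall>\<sigma>\<in>{1, -1::real}.
            (let W = (\<lambda>idx. outer d (v k) idx + \<sigma> * outer d (v l) idx) in
              (1 - \<epsilon>) * fnorm2 d p W \<le> fnorm2 d ?q (mode_prod p W i0 A)
            \<and> fnorm2 d ?q (mode_prod p W i0 A) \<le> (1 + \<epsilon>) * fnorm2 d p W)"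
  proof (intro allI impI ballI)
    fix k l \<sigma> assume k: "k < K" and l: "l < K" and s: "\<sigma> \<in> {1, -1::real}"
    have ss: "\<sigma>\<^sup>2 = 1" using s by auto
    have e0: "\<epsilon> \<ge> 0" using epos[OF k] .
    have FW: "fnorm2 d p (\<lambda>idx. outer d (v k) idx + \<sigma> * outer d (v l) idx)
        = 1 + 2 * \<sigma> * finner d p (outer d (v k)) (outer d (v l)) + 1"
      by (simp add: fnorm2_lin Fk[OF k] Fk[OF l] ss)
    have LW: "fnorm2 d ?q (mode_prod p (\<lambda>idx. outer d (v k) idx + \<sigma> * outer d (v l) idx) i0 A)
        = vnorm2 m (Ax k) + 2 * \<sigma> * (vinner m (Ax k) (Ax l) * c k l) + vnorm2 m (Ax l)"
      by (simp add: mode_prod_lin Lk fnorm2_lin FLk[OF k] FLk[OF l] H ss)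
    have goal: "(1 - \<epsilon>) * fnorm2 d p (\<lambda>idx. outer d (v k) idx + \<sigma> * outer d (v l) idx)
        \<le> fnorm2 d ?q (mode_prod p (\<lambda>idx. outer d (v k) idx + \<sigma> * outer d (v l) idx) i0 A)
      \<and> fnorm2 d ?q (mode_prod p (\<lambda>idx. outer d (v k) idx + \<sigma> * outer d (v l) idx) i0 A)
        \<le> (1 + \<epsilon>) * fnorm2 d p (\<lambda>idx. outer d (v k) idx + \<sigma> * outer d (v l) idx)"
    proof (cases "k = l")
      case True
      have o1: "finner d p (outer d (v k)) (outer d (v l)) = 1" using orth k True by auto
      have c1: "c k l = 1" using ckk[OF k] True by simp
      have "vinner m (Ax k) (Ax l) = vnorm2 m (Ax k)" using True by (simp add: vnorm2_vinner)
      then have LW': "fnorm2 d ?q (mode_prod p (\<lambda>idx. outer d (v k) idx + \<sigma> * outer d (v l) idx) i0 A)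
          = (2 + 2 * \<sigma>) * vnorm2 m (Ax k)" using LW c1 True by (simp add: algebra_simps)
      from s have "\<sigma> = 1 \<or> \<sigma> = -1" by auto
      then show ?thesis using FW o1 LW' ripk[OF k] e0
        by (elim disjE) auto
    next
      case False
      have o0: "vinner ?N (v k i0) (v l i0) * c k l = 0" using orth k l False G by auto
      have cross: "\<bar>vinner m (Ax k) (Ax l) * c k l\<bar> \<le> \<epsilon> / 2"
      proof (cases "c k l = 0")
        case True then show ?thesis using e0 by simp
      next
        case False
        then have "vinner ?N (v k i0) (v l i0) = 0" using o0 by simp
        then have "\<bar>vinner m (Ax k) (Ax l)\<bar> \<le> \<epsilon> / 2"
          unfolding Ax_def
          using rip_cross[OF rip refl inS1[rule_format, OF k] inS1[rule_format, OF l]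
              \<open>\<kappa> \<ge> 1\<close> nv[OF k] nv[OF l]] by simp
        moreover have "\<bar>c k l\<bar> \<le> 1" using cle k l by simp
        ultimately have "\<bar>vinner m (Ax k) (Ax l)\<bar> * \<bar>c k l\<bar> \<le> \<epsilon> / 2 * 1"
          by (intro mult_mono) auto
        then show ?thesis by (simp add: abs_mult)
      qed
      have sc: "\<bar>2 * \<sigma> * (vinner m (Ax k) (Ax l) * c k l)\<bar> \<le> \<epsilon>"
        using cross s by (auto simp: abs_mult)
      have FW': "fnorm2 d p (\<lambda>idx. outer d (v k) idx + \<sigma> * outer d (v l) idx) = 2"
        using FW orth k l False by simp
      show ?thesis using FW' LW sc ripk[OF k] ripk[OF l] by (auto simp: abs_le_iff)
    qed
    then show "let W = (\<lambda>idx. outer d (v k) idx + \<sigma> * outer d (v l) idx) in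
              (1 - \<epsilon>) * fnorm2 d p W \<le> fnorm2 d ?q (mode_prod p W i0 A)
            \<and> fnorm2 d ?q (mode_prod p W i0 A) \<le> (1 + \<epsilon>) * fnorm2 d p W"
      by (simp add: Let_def)
  qed
  show ?thesis using part1 part2 by blast
qed

end
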